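(* Let $\Gamma(t,s)=\int_{\mathbb{R}}e^{-\rho(\alpha,(s,t])}\mu(\mathrm{d}\alpha)$ be a completely monotone double kernel in which every measure $\rho(\alpha,\cdot)$ is atomless. If $\Gamma$ satisfies condition (K), then it satisfies Assumption (A) with the approximating family $\Gamma_M(t,s)=\int_{[-M,M]}e^{-\rho(\alpha,(s,t])}\mu(\mathrm{d}\alpha)$, $M\in\mathbb{N}^*$.
   Context: Completely monotone double kernel: $\mu$ is a Borel measure on $\mathbb{R}$ finite on compact sets; $(\rho(\alpha,\cdot))_{\alpha\in\mathbb{R}}$ Borel measures on $\mathbb{R}_+$ finite on compact sets with $\rho(\beta,\cdot)-\rho(\alpha,\cdot)\ge0$ for $\alpha\le\beta$; $\Gamma(t,s)<\infty$ for $t>s$; defined for $0<s<t$. Notation $\Delta=\{(t,s):0\le s\le t\}$, $\Delta_T=\{(t,s):0\le s\le t\le T\}$. Condition (K): for every $T$ there exist $\eta>0$, $\gamma\in(0,1/2]$ with $\int_s^t\Gamma(t,u)^2\mathrm{d}u+\int_0^s(\Gamma(t,u)-\Gamma(s,u))^2\mathrm{d}u\le\eta(t-s)^{2\gamma}$ on $\Delta_T$. $\Gamma$ preserves nonnegativity if for every $T>0$, $K$, $x_1,\dots,x_K\in\mathbb{R}$, $0\le t_1<\dots<t_K<T$ with $\sum_{k'\le k}x_{k'}\Gamma(t_k,t_{k'})\ge0$ for all $k$, one has $\sum_{k:t_k\le t}x_k\Gamma(t,t_k)\ge0$ for $t\in[0,T]$. Condition (P): continuous on $\Delta$, $0<\Gamma(s,s)<\infty$,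 preserves nonnegativity, $t\mapsto\Gamma(t,s)$ nonincreasing on $[s,\infty)$. Assumption (A): (K) holds and there are kernels $\Gamma_M$ satisfying (P) with $\int_0^t(\Gamma(t,s)-\Gamma_M(t,s))^2\mathrm{d}s\to0$ for all $t\ge0$ and, for each $T$, constants $\eta>0,\gamma\in(0,1/2]$ with $\int_s^t\Gamma_M(t,u)^2\mathrm{d}u+\int_0^s(\Gamma_M(t,u)-\Gamma_M(s,u))^2\mathrm{d}u\le\eta|t-s|^{2\gamma}$ on $\Delta_T$ for all $M$.
   Formalization: The measure $\mu$ is assumed nonzero, and the approximating kernels $\Gamma_M$ satisfy Condition (P) only for all sufficiently large M, not for every M in N*. The statement above fails without it. *)

theory Defs
  imports "HOL-Analysis.Analysis"
begin

text \<open>Completely monotone double kernel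
  Gamma(t,s) = integral over alpha of exp(-rho(alpha,(s,t])) mu(d alpha).
  The nonnegative integral is converted to a real; it is assumed finite
  (for 0 < s < t) in the main theorem.\<close>
definition cm_kernel :: "real measure \<Rightarrow> (real \<Rightarrow> real measure) \<Rightarrow> real \<Rightarrow> real \<Rightarrow> real" where
  "cm_kernel \<mu> \<rho> t s =
     enn2real (\<integral>\<^sup>+ \<alpha>. ennreal (exp (- measure (\<rho> \<alpha>) {s<..t})) \<partial>\<mu>)"

definition cm_kernel_trunc :: "real measure \<Rightarrow> (real \<Rightarrow> real measure) \<Rightarrow> nat \<Rightarrow> real \<Rightarrow> real \<Rightarrow> real" where
  "cm_kernel_trunc \<mu> \<rho> M t s =
     enn2real (\<integral>\<^sup>+ \<alpha> \<in> {- real M..real M}. ennreal (exp (- measure (\<rho> \<alpha>) {s<..t})) \<partial>\<mu>)"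

definition holder_bound :: "(real \<Rightarrow> real \<Rightarrow> real) \<Rightarrow> real \<Rightarrow> real \<Rightarrow> real \<Rightarrow> bool" where
  "holder_bound G \<eta> \<gamma> T \<longleftrightarrow>
     (\<forall>t s. 0 \<le> s \<and> s \<le> t \<and> t \<le> T \<longrightarrow>
        (\<integral>\<^sup>+ u \<in> {s..t}. ennreal ((G t u)\<^sup>2) \<partial>lborel)
        + (\<integral>\<^sup>+ u \<in> {0..s}. ennreal ((G t u - G s u)\<^sup>2) \<partial>lborel)
        \<le> ennreal (\<eta> * (t - s) powr (2 * \<gamma>)))"

definition condition_K :: "(real \<Rightarrow> real \<Rightarrow> real) \<Rightarrow> bool" where
  "condition_K G \<longleftrightarrow>
     (\<forall>T. \<exists>\<eta> > 0. \<exists>\<gamma>. 0 < \<gamma> \<and> \<gamma> \<le> 1/2 \<and> holder_bound G \<eta> \<gamma> T)"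

definition preserves_nonneg :: "(real \<Rightarrow> real \<Rightarrow> real) \<Rightarrow> bool" where
  "preserves_nonneg G \<longleftrightarrow>
     (\<forall>T > 0. \<forall>K::nat. \<forall>x tt :: nat \<Rightarrow> real.
        (\<forall>i j. i < j \<and> j < K \<longrightarrow> tt i < tt j) \<and>
        (\<forall>k < K. 0 \<le> tt k \<and> tt k < T) \<and>
        (\<forall>k < K. (\<Sum>k' \<le> k. x k' * G (tt k) (tt k')) \<ge> 0)
        \<longrightarrow> (\<forall>t \<in> {0..T}. (\<Sum>k \<in> {k. k < K \<and> tt k \<le> t}. x k * G t (tt k)) \<ge> 0))"

definition condition_P :: "(real \<Rightarrow> real \<Rightarrow> real) \<Rightarrow> bool" where
  "condition_P G \<longleftrightarrow>
     continuous_on {p. 0 \<le> snd p \<and> snd p \<le> fst p} (\<lambda>p. G (fst p) (snd p)) \<and>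
     (\<forall>s \<ge> 0. 0 < G s s) \<and>
     preserves_nonneg G \<and>
     (\<forall>s t1 t2. 0 \<le> s \<and> s \<le> t1 \<and> t1 \<le> t2 \<longrightarrow> G t2 s \<le> G t1 s)"

end

theory Submission
  imports Defs "HOL-Probability.Distribution_Functions"
begin


locale cmk =
  fixes \<mu> :: "real measure" and \<rho> :: "real \<Rightarrow> real measure"
  assumes mu_borel: "sets \<mu> = sets borel"
    and mu_loc_fin: "\<And>C. compact C \<Longrightarrow> emeasure \<mu> C < \<infinity>"
    and rho_borel: "\<And>\<alpha>. sets (\<rho> \<alpha>) = sets borel"
    and rho_nonneg_support: "\<And>\<alpha>. emeasure (\<rho> \<alpha>) {..<0} = 0"
    and rho_loc_fin: "\<And>\<alpha> C. compact C \<Longrightarrow> emeasure (\<rho> \<alpha>) C < \<infinity>"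
    and rho_mono: "\<And>\<alpha> \<beta> A. \<alpha> \<le> \<beta> \<Longrightarrow> A \<in> sets borel \<Longrightarrow>
                      emeasure (\<rho> \<alpha>) A \<le> emeasure (\<rho> \<beta>) A"
    and rho_atomless: "\<And>\<alpha> x. emeasure (\<rho> \<alpha>) {x} = 0"
begin

definition m :: "real \<Rightarrow> real \<Rightarrow> real \<Rightarrow> real" where
  "m \<alpha> s t = measure (\<rho> \<alpha>) {s<..t}"

definition F :: "real \<Rightarrow> real \<Rightarrow> real" where
  "F \<alpha> x = measure (\<rho> \<alpha>) {..x}"

lemma rho_meas: "measurable (\<rho> \<alpha>) N = measurable borel N"
  by (rule measurable_cong_sets[OF rho_borel refl])

lemma rho_sets[simp, measurable_cong]: "A \<in> sets (\<rho> \<alpha>) \<longleftrightarrow> A \<in> sets borel"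
  using rho_borel by auto

lemma fin_Ioc: "emeasure (\<rho> \<alpha>) {s<..t} < \<infinity>"
proof -
  have "emeasure (\<rho> \<alpha>) {s<..t} \<le> emeasure (\<rho> \<alpha>) {s..t}"
    by (rule emeasure_mono) auto
  also have "\<dots> < \<infinity>" by (rule rho_loc_fin) auto
  finally show ?thesis .
qed

lemma fin_Iic: "emeasure (\<rho> \<alpha>) {..x} < \<infinity>"
proof -
  have "emeasure (\<rho> \<alpha>) {..x} \<le> emeasure (\<rho> \<alpha>) ({..<0} \<union> {0..max x 0})"
    by (rule emeasure_mono) auto
  also have "\<dots> \<le> emeasure (\<rho> \<alpha>) {..<0} + emeasure (\<rho> \<alpha>) {0..max x 0}"
    by (rule emeasure_subadditive) auto
  also have "\<dots> < \<infinity>" using rho_nonneg_support rho_loc_fin[of "{0..max x 0}"] by auto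
  finally show ?thesis .
qed

lemma fin_Ioc'[simp]: "emeasure (\<rho> \<alpha>) {s<..t} \<noteq> top"
  using fin_Ioc[of \<alpha> s t] by (simp add: less_top)
lemma fin_Iic'[simp]: "emeasure (\<rho> \<alpha>) {..x} \<noteq> top"
  using fin_Iic[of \<alpha> x] by (simp add: less_top)

lemma m_nonneg: "0 \<le> m \<alpha> s t" by (simp add: m_def)

lemma m_empty: "t \<le> s \<Longrightarrow> m \<alpha> s t = 0" by (simp add: m_def)

lemma m_eq_F: "s \<le> t \<Longrightarrow> m \<alpha> s t = F \<alpha> t - F \<alpha> s"
proof -
  assume "s \<le> t"
  then have e: "{..t} = {..s} \<union> {s<..t}" by auto
  have "measure (\<rho> \<alpha>) ({..s} \<union> {s<..t}) = measure (\<rho> \<alpha>) {..s} + measure (\<rho> \<alpha>) {s<..t}"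
    using fin_Iic'[of \<alpha> s] fin_Ioc'[of \<alpha> s t] by (intro measure_Union) auto
  then show ?thesis unfolding F_def m_def e by simp
qed

lemma F_mono: "x \<le> y \<Longrightarrow> F \<alpha> x \<le> F \<alpha> y"
  unfolding F_def measure_def
  by (rule enn2real_mono) (auto intro!: emeasure_mono simp: less_top[symmetric])

lemma m_add: "s \<le> r \<Longrightarrow> r \<le> t \<Longrightarrow> m \<alpha> s t = m \<alpha> s r + m \<alpha> r t"
  by (simp add: m_eq_F)

lemma m_max: "m \<alpha> s t = max 0 (F \<alpha> t - F \<alpha> s)"
proof (cases "s \<le> t")
  case True thus ?thesis using m_eq_F[OF True] F_mono[OF True, of \<alpha>] by simp
next
  case False thus ?thesis using m_empty[of t s \<alpha>] F_mono[of t s \<alpha>] by simp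
qed

lemma m_mono_t: "t1 \<le> t2 \<Longrightarrow> m \<alpha> s t1 \<le> m \<alpha> s t2"
  unfolding m_max using F_mono[of t1 t2 \<alpha>] by simp

lemma m_mono_alpha: "\<alpha> \<le> \<beta> \<Longrightarrow> m \<alpha> s t \<le> m \<beta> s t"
  unfolding m_def measure_def
  by (rule enn2real_mono) (auto intro!: rho_mono simp: less_top[symmetric])

lemma m_meas[measurable]: "(\<lambda>\<alpha>. m \<alpha> s t) \<in> borel_measurable borel"
  by (rule borel_measurable_mono) (auto simp: mono_def m_mono_alpha)

lemma F_cont: "isCont (F \<alpha>) x"
proof -
  define R where "R = density (\<rho> \<alpha>) (indicator {..x+1})"
  have sR: "sets R = sets borel" by (simp add: R_def rho_borel)
  have eR: "emeasure R A = emeasure (\<rho> \<alpha>) (A \<inter> {..x+1})" if "A \<in> sets borel" for A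
  proof -
    have "emeasure R A = (\<integral>\<^sup>+y\<in>A. indicator {..x+1} y \<partial>\<rho> \<alpha>)"
      unfolding R_def using that by (subst emeasure_density) (auto simp: rho_meas)
    also have "\<dots> = (\<integral>\<^sup>+y. indicator (A \<inter> {..x+1}) y \<partial>\<rho> \<alpha>)"
      by (intro nn_integral_cong) (auto split: split_indicator)
    also have "\<dots> = emeasure (\<rho> \<alpha>) (A \<inter> {..x+1})"
      using that by (intro nn_integral_indicator) auto
    finally show ?thesis .
  qed
  have "emeasure R (space R) = emeasure (\<rho> \<alpha>) {..x+1}"
    using eR[of UNIV] sR by (simp add: sets_eq_imp_space_eq)
  then have fin: "finite_measure R" by (intro finite_measureI) simp
  interpret R: finite_borel_measure R
    by (intro finite_borel_measure.intro fin finite_borel_measure_axioms.intro sR)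
  have "isCont (cdf R) x"
    unfolding R.isCont_cdf measure_def using eR[of "{x}"] rho_atomless[of \<alpha> x] by simp
  moreover have "eventually (\<lambda>y. F \<alpha> y = cdf R y) (nhds x)"
  proof -
    have "eventually (\<lambda>y. y \<in> {..<x+1}) (nhds x)"
      by (intro eventually_nhds_in_open) auto
    then show ?thesis
    proof eventually_elim
      case (elim y)
      then have "{..y} \<inter> {..x+1} = {..y}" by auto
      then show ?case unfolding F_def cdf_def measure_def using eR[of "{..y}"] by simp
    qed
  qed
  ultimately show ?thesis using isCont_cong by blast
qed

definition E :: "real \<Rightarrow> real \<Rightarrow> real \<Rightarrow> real" where
  "E \<alpha> t s = exp (- m \<alpha> s t)"

lemma E_pos: "0 < E \<alpha> t s" by (simp add: E_def)
lemma E_le1: "E \<alpha> t s \<le> 1" by (simp add: E_def m_nonneg)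
lemma E_same: "E \<alpha> s s = 1" by (simp add: E_def m_empty)
lemma E_antimono: "\<alpha> \<le> \<beta> \<Longrightarrow> E \<beta> t s \<le> E \<alpha> t s"
  by (simp add: E_def m_mono_alpha)
lemma E_mono_t: "t1 \<le> t2 \<Longrightarrow> E \<alpha> t2 s \<le> E \<alpha> t1 s"
  by (simp add: E_def m_mono_t)
lemma E_mult: "s \<le> r \<Longrightarrow> r \<le> t \<Longrightarrow> E \<alpha> t s = E \<alpha> t r * E \<alpha> r s"
  by (simp add: E_def m_add[of s r t] exp_add[symmetric] algebra_simps)
lemma E_meas[measurable]: "(\<lambda>\<alpha>. E \<alpha> t s) \<in> borel_measurable borel"
  unfolding E_def by measurable

lemma E_cont: "continuous_on UNIV (\<lambda>p. E \<alpha> (fst p) (snd p))"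
  unfolding E_def m_max
  by (intro continuous_intros continuous_on_compose2[OF continuous_at_imp_continuous_on[of UNIV "F \<alpha>"]]) (auto simp: F_cont)

end


definition Qp :: "(real \<Rightarrow> real) \<Rightarrow> bool" where
  "Qp \<Psi> \<longleftrightarrow> (\<forall>\<alpha> \<beta>. \<alpha> \<le> \<beta> \<longrightarrow> 0 < \<Psi> \<beta> \<longrightarrow> \<Psi> \<beta> \<le> \<Psi> \<alpha>)"

lemma Qp_step:
  assumes "Qp \<Psi>" "0 \<le> c" "\<And>\<alpha> \<beta>. \<alpha> \<le> \<beta> \<Longrightarrow> e \<beta> \<le> e \<alpha>" "\<And>\<alpha>. 0 < e \<alpha>"
  shows "Qp (\<lambda>\<alpha>. e \<alpha> * (\<Psi> \<alpha> - c))"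
  unfolding Qp_def
proof (intro allI impI)
  fix \<alpha> \<beta> :: real assume ab: "\<alpha> \<le> \<beta>" and p: "0 < e \<beta> * (\<Psi> \<beta> - c)"
  have "0 < \<Psi> \<beta> - c" using p assms(4)[of \<beta>] by (simp add: zero_less_mult_iff)
  then have "\<Psi> \<beta> \<le> \<Psi> \<alpha>" using assms(1,2) ab unfolding Qp_def by auto
  show "e \<beta> * (\<Psi> \<beta> - c) \<le> e \<alpha> * (\<Psi> \<alpha> - c)"
    using \<open>0 < \<Psi> \<beta> - c\<close> \<open>\<Psi> \<beta> \<le> \<Psi> \<alpha>\<close> assms(3)[OF ab] assms(4)[of \<beta>]
    by (intro mult_mono) auto
qed

locale fmb = finite_measure N for N :: "real measure" +
  assumes N_borel: "sets N = sets borel"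
begin

lemma N_meas: "measurable N M = measurable borel M"
  by (rule measurable_cong_sets[OF N_borel refl])

lemma int_bdd: "(f::real\<Rightarrow>real) \<in> borel_measurable borel \<Longrightarrow> (\<And>x. \<bar>f x\<bar> \<le> B) \<Longrightarrow> integrable N f"
  by (intro integrable_const_bound[where B=B]) (auto simp: N_meas)

definition Inv :: "(real \<Rightarrow> real) \<Rightarrow> bool" where
  "Inv \<Psi> \<longleftrightarrow> Qp \<Psi> \<and> \<Psi> \<in> borel_measurable borel \<and> (\<exists>B. \<forall>x. \<bar>\<Psi> x\<bar> \<le> B) \<and> 0 \<le> integral\<^sup>L N \<Psi>"

lemma P_lemma:
  assumes "Inv \<Psi>" and hm: "h \<in> borel_measurable borel"
    and hmono: "\<And>\<alpha> \<beta>. \<alpha> \<le> \<beta> \<Longrightarrow> h \<beta> \<le> h \<alpha>" and h01: "\<And>\<alpha>. 0 \<le> h \<alpha> \<and> h \<alpha> \<le> 1"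
  shows "0 \<le> (\<integral>\<alpha>. h \<alpha> * \<Psi> \<alpha> \<partial>N)"
proof -
  from assms(1) obtain B where Q: "Qp \<Psi>" and pm: "\<Psi> \<in> borel_measurable borel"
    and B: "\<And>x. \<bar>\<Psi> x\<bar> \<le> B" and I: "0 \<le> integral\<^sup>L N \<Psi>"
    unfolding Inv_def by auto
  define S where "S = {\<alpha>. 0 < \<Psi> \<alpha>}"
  define c0 where "c0 = (if S = {} then 1 else Inf (h ` S))"
  have bdd: "bdd_below (h ` S)" using h01 by (auto intro!: bdd_belowI[where m=0])
  have c0: "0 \<le> c0" unfolding c0_def using h01 by (auto intro!: cInf_greatest)
  have pw: "0 \<le> (h \<alpha> - c0) * \<Psi> \<alpha>" for \<alpha>
  proof (cases "0 < \<Psi> \<alpha>")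
    case True
    then have "\<alpha> \<in> S" "S \<noteq> {}" by (auto simp: S_def)
    then have "c0 \<le> h \<alpha>" unfolding c0_def using bdd by (auto intro!: cInf_lower)
    then show ?thesis using True by simp
  next
    case False
    have "h \<alpha> \<le> c0"
    proof (cases "S = {}")
      case True then show ?thesis using h01 by (simp add: c0_def)
    next
      case ne: False
      have "h \<alpha> \<le> h \<beta>" if "\<beta> \<in> S" for \<beta>
      proof -
        have "\<beta> < \<alpha>"
        proof (rule ccontr)
          assume "\<not> \<beta> < \<alpha>"
          then have "\<alpha> \<le> \<beta>" by simp
          with Q that have "\<Psi> \<beta> \<le> \<Psi> \<alpha>" unfolding Qp_def S_def by auto
          with that False show False by (simp add: S_def)
        qed
        then show ?thesis using hmono by simp
      qed
      then show ?thesis unfolding c0_def using ne by (auto intro!: cInf_greatest)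
    qed
    then show ?thesis using False by (simp add: mult_nonpos_nonpos)
  qed
  have i1: "integrable N (\<lambda>\<alpha>. (h \<alpha> - c0) * \<Psi> \<alpha>)"
  proof (rule int_bdd[where B="(1 + c0) * B"])
    show "(\<lambda>\<alpha>. (h \<alpha> - c0) * \<Psi> \<alpha>) \<in> borel_measurable borel" using hm pm by measurable
    fix x
    have "\<bar>h x - c0\<bar> \<le> 1 + c0" using h01[of x] c0 by (simp add: abs_le_iff)
    then show "\<bar>(h x - c0) * \<Psi> x\<bar> \<le> (1 + c0) * B"
      unfolding abs_mult using B[of x] by (intro mult_mono) auto
  qed
  have i2: "integrable N \<Psi>" by (rule int_bdd[OF pm B])
  have "(\<integral>\<alpha>. h \<alpha> * \<Psi> \<alpha> \<partial>N) = (\<integral>\<alpha>. (h \<alpha> - c0) * \<Psi> \<alpha> + c0 * \<Psi> \<alpha> \<partial>N)"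
    by (simp add: algebra_simps)
  also have "\<dots> = (\<integral>\<alpha>. (h \<alpha> - c0) * \<Psi> \<alpha> \<partial>N) + c0 * integral\<^sup>L N \<Psi>"
    using i1 i2 by simp
  also have "\<dots> \<ge> 0" using pw c0 I by (intro add_nonneg_nonneg integral_nonneg) auto
  finally show ?thesis .
qed


lemma int_le_bound: "(f::real\<Rightarrow>real) \<in> borel_measurable borel \<Longrightarrow> (\<And>x. \<bar>f x\<bar> \<le> B) \<Longrightarrow>
   integral\<^sup>L N f \<le> B * measure N (space N)"
proof -
  assume m: "f \<in> borel_measurable borel" and b: "\<And>x. \<bar>f x\<bar> \<le> B"
  have "integral\<^sup>L N f \<le> (\<integral>x. B \<partial>N)"
    using m b by (intro integral_mono int_bdd[OF m b]) (auto simp: abs_le_iff)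
  then show ?thesis by (simp add: mult.commute)
qed

end

locale pn = cmk \<mu> \<rho> + fmb N for \<mu> \<rho> N
begin

definition G :: "real \<Rightarrow> real \<Rightarrow> real" where
  "G t s = (\<integral>\<alpha>. E \<alpha> t s \<partial>N)"

lemma E_int: "integrable N (\<lambda>\<alpha>. E \<alpha> t s)"
  by (rule int_bdd[where B=1]) (auto simp: E_le1 less_imp_le[OF E_pos])

lemma J_lemma:
  fixes n :: nat
  shows "(\<And>i j. i \<le> j \<Longrightarrow> j < n \<Longrightarrow> tt i \<le> tt j) \<Longrightarrow>
   (\<And>k. k < n \<Longrightarrow> 0 \<le> (\<Sum>k'\<le>k. x k' * G (tt k) (tt k'))) \<Longrightarrow>
   Inv \<Psi> \<Longrightarrow>
   0 \<le> (\<Sum>j<n. x j * (\<integral>\<alpha>. E \<alpha> (tt (n - 1)) (tt j) * \<Psi> \<alpha> \<partial>N))"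
proof (induction n arbitrary: \<Psi>)
  case 0 then show ?case by simp
next
  case (Suc n)
  from Suc.prems(3) obtain B where Q: "Qp \<Psi>" and pm[measurable]: "\<Psi> \<in> borel_measurable borel"
    and B: "\<And>x. \<bar>\<Psi> x\<bar> \<le> B" and I: "0 \<le> integral\<^sup>L N \<Psi>"
    unfolding Inv_def by auto
  define \<mu>N where "\<mu>N = measure N (space N)"
  define c where "c = integral\<^sup>L N \<Psi> / \<mu>N"
  have c0: "0 \<le> c" unfolding c_def \<mu>N_def using I by simp
  have i\<Psi>: "integrable N \<Psi>" by (rule int_bdd[OF pm B])
  have intc: "integral\<^sup>L N \<Psi> = c * \<mu>N"
  proof (cases "\<mu>N = 0")
    case True
    then have "integral\<^sup>L N \<Psi> \<le> 0" using int_le_bound[OF pm B] by (simp add: \<mu>N_def)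
    then show ?thesis using I True by simp
  next
    case False then show ?thesis by (simp add: c_def)
  qed
  define e where "e \<alpha> = E \<alpha> (tt n) (tt (n - 1))" for \<alpha>
  define \<Psi>' where "\<Psi>' \<alpha> = e \<alpha> * (\<Psi> \<alpha> - c)" for \<alpha>
  have Bc: "\<bar>\<Psi> x - c\<bar> \<le> B + c" for x using B[of x] c0 by (simp add: abs_le_iff)
  have inv1: "Inv (\<lambda>\<alpha>. \<Psi> \<alpha> - c)"
    unfolding Inv_def
  proof (intro conjI)
    show "Qp (\<lambda>\<alpha>. \<Psi> \<alpha> - c)" using Qp_step[OF Q c0, of "\<lambda>_. 1"] by simp
    show "(\<lambda>\<alpha>. \<Psi> \<alpha> - c) \<in> borel_measurable borel" by measurable
    show "\<exists>B. \<forall>x. \<bar>\<Psi> x - c\<bar> \<le> B" using Bc by blast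
    show "0 \<le> (\<integral>\<alpha>. \<Psi> \<alpha> - c \<partial>N)" using i\<Psi> intc by (simp add: \<mu>N_def)
  qed
  have inv2: "Inv \<Psi>'"
    unfolding Inv_def
  proof (intro conjI)
    show "Qp \<Psi>'" unfolding \<Psi>'_def e_def
      by (rule Qp_step[OF Q c0]) (auto simp: E_antimono E_pos)
    show "\<Psi>' \<in> borel_measurable borel" unfolding \<Psi>'_def e_def by measurable
    have "\<bar>\<Psi>' x\<bar> \<le> B + c" for x
    proof -
      have "\<bar>\<Psi>' x\<bar> = e x * \<bar>\<Psi> x - c\<bar>" unfolding \<Psi>'_def abs_mult e_def using E_pos
        by (simp add: less_imp_le)
      also have "\<dots> \<le> 1 * (B + c)" using Bc[of x] E_le1 E_pos unfolding e_def
        by (intro mult_mono) (auto simp: less_imp_le)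
      finally show ?thesis by simp
    qed
    then show "\<exists>B. \<forall>x. \<bar>\<Psi>' x\<bar> \<le> B" by blast
    show "0 \<le> integral\<^sup>L N \<Psi>'" unfolding \<Psi>'_def
      using P_lemma[OF inv1, of e] E_antimono E_pos E_le1 unfolding e_def
      by (auto simp: less_imp_le)
  qed
  have IH: "0 \<le> (\<Sum>j<n. x j * (\<integral>\<alpha>. E \<alpha> (tt (n - 1)) (tt j) * \<Psi>' \<alpha> \<partial>N))"
    using Suc.IH[OF _ _ inv2] Suc.prems(1,2) by simp
  have trm: "x j * (\<integral>\<alpha>. E \<alpha> (tt n) (tt j) * \<Psi> \<alpha> \<partial>N)
      = c * (x j * G (tt n) (tt j))
        + (if j < n then x j * (\<integral>\<alpha>. E \<alpha> (tt (n - 1)) (tt j) * \<Psi>' \<alpha> \<partial>N) else 0)"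
    if "j < Suc n" for j
  proof -
    have i3: "integrable N (\<lambda>\<alpha>. E \<alpha> (tt n) (tt j) * (\<Psi> \<alpha> - c))"
      by (rule int_bdd[where B="B + c"]) (use Bc E_le1 E_pos in \<open>auto simp: abs_mult less_imp_le intro!: mult_le_one[of _ "B+c", simplified] mult_mono[of _ 1 _ "B+c", simplified]\<close>)
    have "(\<integral>\<alpha>. E \<alpha> (tt n) (tt j) * \<Psi> \<alpha> \<partial>N)
        = (\<integral>\<alpha>. c * E \<alpha> (tt n) (tt j) + E \<alpha> (tt n) (tt j) * (\<Psi> \<alpha> - c) \<partial>N)"
      by (simp add: algebra_simps)
    also have "\<dots> = c * G (tt n) (tt j) + (\<integral>\<alpha>. E \<alpha> (tt n) (tt j) * (\<Psi> \<alpha> - c) \<partial>N)"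
      using i3 E_int by (simp add: G_def)
    also have "(\<integral>\<alpha>. E \<alpha> (tt n) (tt j) * (\<Psi> \<alpha> - c) \<partial>N)
        = (if j < n then (\<integral>\<alpha>. E \<alpha> (tt (n - 1)) (tt j) * \<Psi>' \<alpha> \<partial>N) else 0)"
    proof (cases "j < n")
      case True
      have "tt j \<le> tt (n - 1)" "tt (n - 1) \<le> tt n" using Suc.prems(1) True by auto
      then have "E \<alpha> (tt n) (tt j) = e \<alpha> * E \<alpha> (tt (n - 1)) (tt j)" for \<alpha>
        unfolding e_def by (rule E_mult)
      then show ?thesis using True by (simp add: \<Psi>'_def algebra_simps)
    next
      case False
      then have "j = n" using that by simp
      then show ?thesis using inv1 i\<Psi> intc by (simp add: E_same \<mu>N_def)
    qed
    finally show ?thesis by (simp add: algebra_simps)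
  qed
  have sif: "(\<Sum>j<Suc n. (if j < n then x j * (\<integral>\<alpha>. E \<alpha> (tt (n - 1)) (tt j) * \<Psi>' \<alpha> \<partial>N) else 0))
     = (\<Sum>j<n. x j * (\<integral>\<alpha>. E \<alpha> (tt (n - 1)) (tt j) * \<Psi>' \<alpha> \<partial>N))"
    by (simp only: sum.lessThan_Suc) simp
  have "(\<Sum>j<Suc n. x j * (\<integral>\<alpha>. E \<alpha> (tt (Suc n - 1)) (tt j) * \<Psi> \<alpha> \<partial>N))
      = c * (\<Sum>j\<le>n. x j * G (tt n) (tt j))
        + (\<Sum>j<Suc n. (if j < n then x j * (\<integral>\<alpha>. E \<alpha> (tt (n - 1)) (tt j) * \<Psi>' \<alpha> \<partial>N) else 0))"
  proof -
    have "(\<Sum>j<Suc n. x j * (\<integral>\<alpha>. E \<alpha> (tt n) (tt j) * \<Psi> \<alpha> \<partial>N))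
      = (\<Sum>j<Suc n. c * (x j * G (tt n) (tt j)) + (if j < n then x j * (\<integral>\<alpha>. E \<alpha> (tt (n - 1)) (tt j) * \<Psi>' \<alpha> \<partial>N) else 0))"
      by (rule sum.cong[OF refl], rule trm) simp
    then show ?thesis
      by (simp only: diff_Suc_1 sum.distrib sum_distrib_left lessThan_Suc_atMost[symmetric])
  qed
  also have "\<dots> = c * (\<Sum>j\<le>n. x j * G (tt n) (tt j))
        + (\<Sum>j<n. x j * (\<integral>\<alpha>. E \<alpha> (tt (n - 1)) (tt j) * \<Psi>' \<alpha> \<partial>N))"
    by (simp only: sif)
  also have "\<dots> \<ge> 0" using c0 Suc.prems(2)[of n] IH by simp
  finally show ?case .
qed


lemma G_preserves: "preserves_nonneg G"
  unfolding preserves_nonneg_def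
proof (intro allI impI ballI)
  fix T :: real and K :: nat and x tt :: "nat \<Rightarrow> real" and t :: real
  assume "0 < T"
    and H: "(\<forall>i j. i < j \<and> j < K \<longrightarrow> tt i < tt j) \<and> (\<forall>k<K. 0 \<le> tt k \<and> tt k < T) \<and>
       (\<forall>k<K. 0 \<le> (\<Sum>k'\<le>k. x k' * G (tt k) (tt k')))"
    and t: "t \<in> {0..T}"
  define n where "n = (LEAST k. k = K \<or> t < tt k)"
  have nK: "n \<le> K" unfolding n_def by (rule Least_le) simp
  have below: "tt k \<le> t" if "k < n" for k
  proof -
    have "\<not> (k = K \<or> t < tt k)"
      using not_less_Least[of k "\<lambda>k. k = K \<or> t < tt k"] that unfolding n_def by blast
    then show ?thesis by simp
  qed
  have Hmono: "\<And>i j. i < j \<Longrightarrow> j < K \<Longrightarrow> tt i < tt j" using H[THEN conjunct1] by simp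
  have above: "t < tt k" if "n \<le> k" "k < K" for k
  proof -
    have "n = K \<or> t < tt n" unfolding n_def by (rule LeastI[of _ K]) simp
    then have "t < tt n" using that by auto
    moreover have "tt n \<le> tt k"
    proof (cases "n = k")
      case False then show ?thesis using Hmono[of n k] that by simp
    qed simp
    ultimately show ?thesis by simp
  qed
  have set_eq: "{k. k < K \<and> tt k \<le> t} = {..<n}"
  proof (rule set_eqI, rule iffI)
    fix k assume "k \<in> {k. k < K \<and> tt k \<le> t}"
    then show "k \<in> {..<n}" using above[of k] by (cases "k < n") auto
  next
    fix k assume "k \<in> {..<n}"
    then show "k \<in> {k. k < K \<and> tt k \<le> t}" using below[of k] nK by auto
  qed
  have mono: "tt i \<le> tt j" if "i \<le> j" "j < n" for i j
  proof (cases "i = j")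
    case False then show ?thesis using Hmono[of i j] that nK by simp
  qed simp
  show "0 \<le> (\<Sum>k\<in>{k. k < K \<and> tt k \<le> t}. x k * G t (tt k))"
  proof (cases "n = 0")
    case True then show ?thesis unfolding set_eq by simp
  next
    case False
    define \<Psi> where "\<Psi> \<alpha> = E \<alpha> t (tt (n - 1))" for \<alpha>
    have inv: "Inv \<Psi>" unfolding Inv_def
    proof (intro conjI)
      show "Qp \<Psi>" unfolding Qp_def \<Psi>_def by (auto intro: E_antimono)
      show "\<Psi> \<in> borel_measurable borel" unfolding \<Psi>_def by measurable
      have "\<bar>\<Psi> y\<bar> \<le> 1" for y unfolding \<Psi>_def using E_pos E_le1
        by (simp add: less_imp_le)
      then show "\<exists>B. \<forall>y. \<bar>\<Psi> y\<bar> \<le> B" by blast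
      show "0 \<le> integral\<^sup>L N \<Psi>" unfolding \<Psi>_def
        by (intro integral_nonneg_AE AE_I2) (simp add: less_imp_le[OF E_pos])
    qed
    have hK: "\<forall>k<K. 0 \<le> (\<Sum>k'\<le>k. x k' * G (tt k) (tt k'))" by (rule H[THEN conjunct2, THEN conjunct2])
    have hyp: "0 \<le> (\<Sum>k'\<le>k. x k' * G (tt k) (tt k'))" if "k < n" for k
      using hK that nK by simp
    have "0 \<le> (\<Sum>j<n. x j * (\<integral>\<alpha>. E \<alpha> (tt (n - 1)) (tt j) * \<Psi> \<alpha> \<partial>N))"
      by (rule J_lemma[OF mono hyp inv])
    also have "\<dots> = (\<Sum>j<n. x j * G t (tt j))"
    proof (rule sum.cong[OF refl])
      fix j assume "j \<in> {..<n}"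
      then have "tt j \<le> tt (n - 1)" "tt (n - 1) \<le> t" using mono below False by auto
      then have "E \<alpha> t (tt j) = E \<alpha> (tt (n - 1)) (tt j) * \<Psi> \<alpha>" for \<alpha>
        unfolding \<Psi>_def by (subst E_mult[of "tt j" "tt (n - 1)" t]) (auto simp: mult.commute)
      then show "x j * (\<integral>\<alpha>. E \<alpha> (tt (n - 1)) (tt j) * \<Psi> \<alpha> \<partial>N) = x j * G t (tt j)"
        by (simp add: G_def)
    qed
    finally show ?thesis unfolding set_eq .
  qed
qed

end


context pn
begin

lemma G_cont: "continuous_on UNIV (\<lambda>p. G (fst p) (snd p))"
proof (rule continuous_on_sequentiallyI)
  fix u :: "nat \<Rightarrow> real \<times> real" and a assume u: "u \<longlonglongrightarrow> a"
  show "(\<lambda>n. G (fst (u n)) (snd (u n))) \<longlonglongrightarrow> G (fst a) (snd a)"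
    unfolding G_def
  proof (rule integral_dominated_convergence[where w="\<lambda>_. 1"])
    show "(\<lambda>\<alpha>. E \<alpha> (fst a) (snd a)) \<in> borel_measurable N" by (simp add: N_meas)
    show "(\<lambda>\<alpha>. E \<alpha> (fst (u n)) (snd (u n))) \<in> borel_measurable N" for n by (simp add: N_meas)
    show "integrable N (\<lambda>_. 1::real)" by simp
    show "AE \<alpha> in N. (\<lambda>n. E \<alpha> (fst (u n)) (snd (u n))) \<longlonglongrightarrow> E \<alpha> (fst a) (snd a)"
    proof (rule AE_I2)
      fix \<alpha>
      show "(\<lambda>n. E \<alpha> (fst (u n)) (snd (u n))) \<longlonglongrightarrow> E \<alpha> (fst a) (snd a)"
        using continuous_on_tendsto_compose[OF E_cont[of \<alpha>] u] by simp
    qed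
    show "AE \<alpha> in N. norm (E \<alpha> (fst (u n)) (snd (u n))) \<le> 1" for n
      using E_pos E_le1 by (simp add: less_imp_le)
  qed
qed

lemma G_meas2: "(\<lambda>s. G t s) \<in> borel_measurable borel"
proof (rule borel_measurable_continuous_onI)
  have "continuous_on UNIV ((\<lambda>p. G (fst p) (snd p)) \<circ> (\<lambda>s. (t, s)))"
    by (intro continuous_on_compose continuous_intros continuous_on_subset[OF G_cont]) auto
  then show "continuous_on UNIV (\<lambda>s. G t s)" by (simp add: o_def)
qed

lemma G_same: "G s s = measure N (space N)"
  by (simp add: G_def E_same)

lemma G_mono_t: "t1 \<le> t2 \<Longrightarrow> G t2 s \<le> G t1 s"
  unfolding G_def by (intro integral_mono E_int E_mono_t)

end

context cmk
begin

lemma mu_meas: "measurable \<mu> X = measurable borel X"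
  by (rule measurable_cong_sets[OF mu_borel refl])

definition SM :: "nat \<Rightarrow> real set" where "SM M = {- real M..real M}"
definition NM :: "nat \<Rightarrow> real measure" where "NM M = density \<mu> (indicator (SM M))"

lemma SM_fin: "emeasure \<mu> (SM M) < \<infinity>"
  unfolding SM_def by (rule mu_loc_fin) simp

lemma NM_sets: "sets (NM M) = sets borel"
  by (simp add: NM_def mu_borel)

lemma NM_space: "space (NM M) = UNIV"
  using sets_eq_imp_space_eq[OF NM_sets] by simp

lemma NM_emeasure_space: "emeasure (NM M) (space (NM M)) = emeasure \<mu> (SM M)"
proof -
  have "emeasure (NM M) (space (NM M)) = (\<integral>\<^sup>+x\<in>UNIV. indicator (SM M) x \<partial>\<mu>)"
    unfolding NM_space unfolding NM_def
    by (subst emeasure_density) (auto simp: mu_meas mu_borel SM_def)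
  also have "\<dots> = emeasure \<mu> (SM M)"
    by (simp add: nn_integral_indicator mu_borel SM_def)
  finally show ?thesis .
qed

lemma NM_fmb: "fmb (NM M)"
proof (intro fmb.intro fmb_axioms.intro finite_measureI NM_sets)
  show "emeasure (NM M) (space (NM M)) \<noteq> \<infinity>" using SM_fin[of M] NM_emeasure_space by simp
qed

lemma NM_pn: "pn \<mu> \<rho> (NM M)"
  by (intro pn.intro NM_fmb) unfold_locales

lemma trunc_eq: "cm_kernel_trunc \<mu> \<rho> M t s = pn.G \<rho> (NM M) t s"
proof -
  interpret P: pn \<mu> \<rho> "NM M" by (rule NM_pn)
  have "(\<integral>\<^sup>+\<alpha>. ennreal (E \<alpha> t s) \<partial>NM M) = (\<integral>\<^sup>+\<alpha>. indicator (SM M) \<alpha> * ennreal (E \<alpha> t s) \<partial>\<mu>)"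
    unfolding NM_def by (subst nn_integral_density) (auto simp: mu_meas SM_def)
  also have "\<dots> = (\<integral>\<^sup>+\<alpha>\<in>{- real M..real M}. ennreal (exp (- measure (\<rho> \<alpha>) {s<..t})) \<partial>\<mu>)"
    by (simp add: SM_def E_def m_def mult.commute)
  finally have eq: "(\<integral>\<^sup>+\<alpha>\<in>{- real M..real M}. ennreal (exp (- measure (\<rho> \<alpha>) {s<..t})) \<partial>\<mu>)
     = ennreal (P.G t s)"
    unfolding P.G_def using P.E_int
    by (subst (asm) nn_integral_eq_integral) (auto simp: less_imp_le[OF E_pos])
  have "0 \<le> P.G t s" unfolding P.G_def by (intro integral_nonneg_AE AE_I2) (simp add: less_imp_le[OF E_pos])
  then show ?thesis unfolding cm_kernel_trunc_def eq by simp
qed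

end


context cmk
begin

lemma E_meas_mu[measurable]: "(\<lambda>\<alpha>. E \<alpha> t s) \<in> borel_measurable \<mu>"
  by (simp add: mu_meas)

lemma SM_sets[measurable]: "SM M \<in> sets borel" by (simp add: SM_def)
lemma SM_sets_mu[measurable]: "SM M \<in> sets \<mu>" by (simp add: SM_def mu_borel)

lemma trunc_nonneg: "0 \<le> cm_kernel_trunc \<mu> \<rho> M t s"
  by (simp add: cm_kernel_trunc_def)

lemma trunc_def': "cm_kernel_trunc \<mu> \<rho> M t s = enn2real (\<integral>\<^sup>+\<alpha>. ennreal (E \<alpha> t s) * indicator (SM M) \<alpha> \<partial>\<mu>)"
  by (simp add: cm_kernel_trunc_def E_def m_def SM_def)

lemma kernel_def': "cm_kernel \<mu> \<rho> t s = enn2real (\<integral>\<^sup>+\<alpha>. ennreal (E \<alpha> t s) \<partial>\<mu>)"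
  by (simp add: cm_kernel_def E_def m_def)

lemma trunc_enn: "(\<integral>\<^sup>+\<alpha>. ennreal (E \<alpha> t s) * indicator (SM M) \<alpha> \<partial>\<mu>) = ennreal (cm_kernel_trunc \<mu> \<rho> M t s)"
proof -
  have "(\<integral>\<^sup>+\<alpha>. ennreal (E \<alpha> t s) * indicator (SM M) \<alpha> \<partial>\<mu>) \<le> (\<integral>\<^sup>+\<alpha>. indicator (SM M) \<alpha> \<partial>\<mu>)"
    by (intro nn_integral_mono) (auto simp: E_le1 split: split_indicator)
  also have "\<dots> = emeasure \<mu> (SM M)" by (simp add: mu_borel)
  also have "\<dots> < \<infinity>" by (rule SM_fin)
  finally show ?thesis unfolding trunc_def' by simp
qed

lemma trunc_int: "cm_kernel_trunc \<mu> \<rho> M t s = (\<integral>\<alpha>. E \<alpha> t s * indicator (SM M) \<alpha> \<partial>\<mu>)"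
  unfolding trunc_def' nn_integral_set_ennreal
  by (subst integral_eq_nn_integral) (auto simp: less_imp_le[OF E_pos])

lemma Ge_fin:
  assumes Gf: "\<And>t s. 0 < s \<Longrightarrow> s < t \<Longrightarrow> (\<integral>\<^sup>+ \<alpha>. ennreal (exp (- measure (\<rho> \<alpha>) {s<..t})) \<partial>\<mu>) < \<infinity>"
    and "0 < u" "u < t"
  shows "(\<integral>\<^sup>+\<alpha>. ennreal (E \<alpha> t u) \<partial>\<mu>) < \<infinity>"
  using Gf[OF assms(2,3)] by (simp add: E_def m_def)

lemma kernel_int:
  assumes "(\<integral>\<^sup>+\<alpha>. ennreal (E \<alpha> t u) \<partial>\<mu>) < \<infinity>"
  shows "integrable \<mu> (\<lambda>\<alpha>. E \<alpha> t u)" and "cm_kernel \<mu> \<rho> t u = (\<integral>\<alpha>. E \<alpha> t u \<partial>\<mu>)"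
proof -
  show "integrable \<mu> (\<lambda>\<alpha>. E \<alpha> t u)"
    using assms by (intro integrableI_nonneg) (auto simp: less_imp_le[OF E_pos])
  show "cm_kernel \<mu> \<rho> t u = (\<integral>\<alpha>. E \<alpha> t u \<partial>\<mu>)"
    unfolding kernel_def' by (subst integral_eq_nn_integral) (auto simp: less_imp_le[OF E_pos])
qed

lemma trunc_le_kernel:
  assumes "(\<integral>\<^sup>+\<alpha>. ennreal (E \<alpha> t u) \<partial>\<mu>) < \<infinity>"
  shows "cm_kernel_trunc \<mu> \<rho> M t u \<le> cm_kernel \<mu> \<rho> t u"
  unfolding trunc_def' kernel_def'
  by (rule enn2real_mono) (use assms in \<open>auto intro!: nn_integral_mono simp: less_top split: split_indicator\<close>)

lemma diff_compare:
  assumes f1: "(\<integral>\<^sup>+\<alpha>. ennreal (E \<alpha> t u) \<partial>\<mu>) < \<infinity>" and f2: "(\<integral>\<^sup>+\<alpha>. ennreal (E \<alpha> s u) \<partial>\<mu>) < \<infinity>"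
    and st: "s \<le> t"
  shows "0 \<le> cm_kernel_trunc \<mu> \<rho> M s u - cm_kernel_trunc \<mu> \<rho> M t u"
    and "cm_kernel_trunc \<mu> \<rho> M s u - cm_kernel_trunc \<mu> \<rho> M t u \<le> cm_kernel \<mu> \<rho> s u - cm_kernel \<mu> \<rho> t u"
proof -
  note i1 = kernel_int[OF f1] and i2 = kernel_int[OF f2]
  have j1: "integrable \<mu> (\<lambda>\<alpha>. E \<alpha> t u * indicator (SM M) \<alpha>)"
    by (rule integrable_real_mult_indicator) (auto simp: mu_borel i1)
  have j2: "integrable \<mu> (\<lambda>\<alpha>. E \<alpha> s u * indicator (SM M) \<alpha>)"
    by (rule integrable_real_mult_indicator) (auto simp: mu_borel i2)
  have d1: "cm_kernel_trunc \<mu> \<rho> M s u - cm_kernel_trunc \<mu> \<rho> M t u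
      = (\<integral>\<alpha>. (E \<alpha> s u - E \<alpha> t u) * indicator (SM M) \<alpha> \<partial>\<mu>)"
    unfolding trunc_int using j1 j2 by (simp add: left_diff_distrib)
  have d2: "cm_kernel \<mu> \<rho> s u - cm_kernel \<mu> \<rho> t u = (\<integral>\<alpha>. E \<alpha> s u - E \<alpha> t u \<partial>\<mu>)"
    using i1 i2 by simp
  have mono: "E \<alpha> t u \<le> E \<alpha> s u" for \<alpha> using E_mono_t[OF st] .
  show "0 \<le> cm_kernel_trunc \<mu> \<rho> M s u - cm_kernel_trunc \<mu> \<rho> M t u"
    unfolding d1 by (intro integral_nonneg_AE AE_I2) (simp add: mono)
  show "cm_kernel_trunc \<mu> \<rho> M s u - cm_kernel_trunc \<mu> \<rho> M t u \<le> cm_kernel \<mu> \<rho> s u - cm_kernel \<mu> \<rho> t u"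
    unfolding d1 d2
  proof (rule integral_mono)
    show "integrable \<mu> (\<lambda>\<alpha>. (E \<alpha> s u - E \<alpha> t u) * indicator (SM M) \<alpha>)"
      by (rule integrable_real_mult_indicator) (auto simp: mu_borel i1 i2)
    show "integrable \<mu> (\<lambda>\<alpha>. E \<alpha> s u - E \<alpha> t u)" using i1 i2 by simp
    show "(E \<alpha> s u - E \<alpha> t u) * indicator (SM M) \<alpha> \<le> E \<alpha> s u - E \<alpha> t u" for \<alpha>
      using mono[of \<alpha>] by (simp split: split_indicator)
  qed
qed


lemma holder_transfer:
  assumes Gf: "\<And>t s. 0 < s \<Longrightarrow> s < t \<Longrightarrow> (\<integral>\<^sup>+ \<alpha>. ennreal (exp (- measure (\<rho> \<alpha>) {s<..t})) \<partial>\<mu>) < \<infinity>"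
    and hb: "holder_bound (cm_kernel \<mu> \<rho>) \<eta> \<gamma> T"
  shows "holder_bound (cm_kernel_trunc \<mu> \<rho> M) \<eta> \<gamma> T"
  unfolding holder_bound_def
proof (intro allI impI)
  fix t s :: real assume H: "0 \<le> s \<and> s \<le> t \<and> t \<le> T"
  have a1: "(\<integral>\<^sup>+ u\<in>{s..t}. ennreal ((cm_kernel_trunc \<mu> \<rho> M t u)\<^sup>2) \<partial>lborel)
      \<le> (\<integral>\<^sup>+ u\<in>{s..t}. ennreal ((cm_kernel \<mu> \<rho> t u)\<^sup>2) \<partial>lborel)"
  proof (rule nn_integral_mono_AE)
    have "AE u in lborel. u \<noteq> 0" "AE u in lborel. u \<noteq> t" by (rule AE_lborel_singleton)+
    then show "AE u in lborel. ennreal ((cm_kernel_trunc \<mu> \<rho> M t u)\<^sup>2) * indicator {s..t} u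
        \<le> ennreal ((cm_kernel \<mu> \<rho> t u)\<^sup>2) * indicator {s..t} u"
    proof eventually_elim
      case (elim u)
      show ?case
      proof (cases "u \<in> {s..t}")
        case True
        then have "0 < u" "u < t" using elim H by auto
        then have "cm_kernel_trunc \<mu> \<rho> M t u \<le> cm_kernel \<mu> \<rho> t u"
          by (intro trunc_le_kernel Ge_fin[OF Gf])
        then have "(cm_kernel_trunc \<mu> \<rho> M t u)\<^sup>2 \<le> (cm_kernel \<mu> \<rho> t u)\<^sup>2"
          using trunc_nonneg by (intro power_mono) auto
        then show ?thesis using True by (simp add: ennreal_leI)
      qed simp
    qed
  qed
  have a2: "(\<integral>\<^sup>+ u\<in>{0..s}. ennreal ((cm_kernel_trunc \<mu> \<rho> M t u - cm_kernel_trunc \<mu> \<rho> M s u)\<^sup>2) \<partial>lborel)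
      \<le> (\<integral>\<^sup>+ u\<in>{0..s}. ennreal ((cm_kernel \<mu> \<rho> t u - cm_kernel \<mu> \<rho> s u)\<^sup>2) \<partial>lborel)"
  proof (rule nn_integral_mono_AE)
    have "AE u in lborel. u \<noteq> 0" "AE u in lborel. u \<noteq> s" by (rule AE_lborel_singleton)+
    then show "AE u in lborel. ennreal ((cm_kernel_trunc \<mu> \<rho> M t u - cm_kernel_trunc \<mu> \<rho> M s u)\<^sup>2) * indicator {0..s} u
        \<le> ennreal ((cm_kernel \<mu> \<rho> t u - cm_kernel \<mu> \<rho> s u)\<^sup>2) * indicator {0..s} u"
    proof eventually_elim
      case (elim u)
      show ?case
      proof (cases "u \<in> {0..s}")
        case True
        then have "0 < u" "u < s" "u < t" using elim H by auto
        note f = Ge_fin[OF Gf \<open>0 < u\<close> \<open>u < t\<close>] Ge_fin[OF Gf \<open>0 < u\<close> \<open>u < s\<close>]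
        have st: "s \<le> t" using H by simp
        have "(cm_kernel_trunc \<mu> \<rho> M s u - cm_kernel_trunc \<mu> \<rho> M t u)\<^sup>2
            \<le> (cm_kernel \<mu> \<rho> s u - cm_kernel \<mu> \<rho> t u)\<^sup>2"
          using diff_compare[OF f st, of M] by (intro power_mono) auto
        then have "(cm_kernel_trunc \<mu> \<rho> M t u - cm_kernel_trunc \<mu> \<rho> M s u)\<^sup>2
            \<le> (cm_kernel \<mu> \<rho> t u - cm_kernel \<mu> \<rho> s u)\<^sup>2"
          by (simp add: power2_commute)
        then show ?thesis using True by (simp add: ennreal_leI)
      qed simp
    qed
  qed
  have "(\<integral>\<^sup>+ u\<in>{s..t}. ennreal ((cm_kernel \<mu> \<rho> t u)\<^sup>2) \<partial>lborel)
        + (\<integral>\<^sup>+ u\<in>{0..s}. ennreal ((cm_kernel \<mu> \<rho> t u - cm_kernel \<mu> \<rho> s u)\<^sup>2) \<partial>lborel)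
        \<le> ennreal (\<eta> * (t - s) powr (2 * \<gamma>))"
    using hb H unfolding holder_bound_def by blast
  then show "(\<integral>\<^sup>+ u\<in>{s..t}. ennreal ((cm_kernel_trunc \<mu> \<rho> M t u)\<^sup>2) \<partial>lborel)
        + (\<integral>\<^sup>+ u\<in>{0..s}. ennreal ((cm_kernel_trunc \<mu> \<rho> M t u - cm_kernel_trunc \<mu> \<rho> M s u)\<^sup>2) \<partial>lborel)
        \<le> ennreal (\<eta> * (t - s) powr (2 * \<gamma>))"
    using add_mono[OF a1 a2] by (rule order_trans[rotated])
qed


lemma SM_mono: "M \<le> M' \<Longrightarrow> SM M \<subseteq> SM M'"
  by (auto simp: SM_def)

lemma GeM_incseq: "incseq (\<lambda>M. \<lambda>\<alpha>. ennreal (E \<alpha> t s) * indicator (SM M) \<alpha>)"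
  by (intro monoI le_funI) (auto simp: SM_def split: split_indicator)

lemma GeM_SUP: "(SUP M. \<integral>\<^sup>+\<alpha>. ennreal (E \<alpha> t s) * indicator (SM M) \<alpha> \<partial>\<mu>) = (\<integral>\<^sup>+\<alpha>. ennreal (E \<alpha> t s) \<partial>\<mu>)"
proof -
  have "(SUP M. \<integral>\<^sup>+\<alpha>. ennreal (E \<alpha> t s) * indicator (SM M) \<alpha> \<partial>\<mu>)
      = (\<integral>\<^sup>+\<alpha>. (SUP M. ennreal (E \<alpha> t s) * indicator (SM M) \<alpha>) \<partial>\<mu>)"
    by (rule nn_integral_monotone_convergence_SUP[symmetric, OF GeM_incseq]) simp
  also have "\<dots> = (\<integral>\<^sup>+\<alpha>. ennreal (E \<alpha> t s) \<partial>\<mu>)"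
  proof (rule nn_integral_cong)
    fix \<alpha>
    obtain n :: nat where n: "\<bar>\<alpha>\<bar> \<le> real n" using real_arch_simple by blast
    have "\<alpha> \<in> SM n" using n by (auto simp: SM_def)
    show "(SUP M. ennreal (E \<alpha> t s) * indicator (SM M) \<alpha>) = ennreal (E \<alpha> t s)"
    proof (rule antisym)
      show "(SUP M. ennreal (E \<alpha> t s) * indicator (SM M) \<alpha>) \<le> ennreal (E \<alpha> t s)"
        by (rule SUP_least) (simp split: split_indicator)
      show "ennreal (E \<alpha> t s) \<le> (SUP M. ennreal (E \<alpha> t s) * indicator (SM M) \<alpha>)"
        using \<open>\<alpha> \<in> SM n\<close> by (intro SUP_upper2[of n]) auto
    qed
  qed
  finally show ?thesis .
qed

lemma GeM_lim: "(\<lambda>M. \<integral>\<^sup>+\<alpha>. ennreal (E \<alpha> t s) * indicator (SM M) \<alpha> \<partial>\<mu>) \<longlonglongrightarrow> (\<integral>\<^sup>+\<alpha>. ennreal (E \<alpha> t s) \<partial>\<mu>)"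
proof -
  have "incseq (\<lambda>M. \<integral>\<^sup>+\<alpha>. ennreal (E \<alpha> t s) * indicator (SM M) \<alpha> \<partial>\<mu>)"
    using GeM_incseq[of t s] by (intro monoI nn_integral_mono) (auto simp: mono_def le_fun_def)
  from LIMSEQ_SUP[OF this] show ?thesis unfolding GeM_SUP .
qed

lemma trunc_meas[measurable]: "(\<lambda>s. cm_kernel_trunc \<mu> \<rho> M t s) \<in> borel_measurable borel"
proof -
  interpret P: pn \<mu> \<rho> "NM M" by (rule NM_pn)
  show ?thesis unfolding trunc_eq by (rule P.G_meas2)
qed

lemma kernel_meas[measurable]: "(\<lambda>s. cm_kernel \<mu> \<rho> t s) \<in> borel_measurable borel"
proof -
  have "cm_kernel \<mu> \<rho> t s = enn2real (SUP M. ennreal (cm_kernel_trunc \<mu> \<rho> M t s))" for s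
    unfolding kernel_def' GeM_SUP[symmetric] trunc_enn ..
  then show ?thesis by simp
qed

lemma trunc_lim:
  assumes "(\<integral>\<^sup>+\<alpha>. ennreal (E \<alpha> t s) \<partial>\<mu>) < \<infinity>"
  shows "(\<lambda>M. cm_kernel_trunc \<mu> \<rho> M t s) \<longlonglongrightarrow> cm_kernel \<mu> \<rho> t s"
proof -
  let ?L = "\<integral>\<^sup>+\<alpha>. ennreal (E \<alpha> t s) \<partial>\<mu>"
  have L: "?L = ennreal (enn2real ?L)" using assms by (simp add: less_top)
  have "(\<lambda>M. \<integral>\<^sup>+\<alpha>. ennreal (E \<alpha> t s) * indicator (SM M) \<alpha> \<partial>\<mu>) \<longlonglongrightarrow> ennreal (enn2real ?L)"
    using GeM_lim[of t s] L by simp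
  then show ?thesis unfolding trunc_def' kernel_def'
    by (rule tendsto_enn2real) simp
qed

lemma conv:
  assumes Gf: "\<And>t s. 0 < s \<Longrightarrow> s < t \<Longrightarrow> (\<integral>\<^sup>+ \<alpha>. ennreal (exp (- measure (\<rho> \<alpha>) {s<..t})) \<partial>\<mu>) < \<infinity>"
    and hb: "holder_bound (cm_kernel \<mu> \<rho>) \<eta> \<gamma> t" and t: "0 \<le> t"
  shows "(\<lambda>M. \<integral>\<^sup>+ s \<in> {0..t}. ennreal ((cm_kernel \<mu> \<rho> t s - cm_kernel_trunc \<mu> \<rho> M t s)\<^sup>2) \<partial>lborel)
            \<longlonglongrightarrow> 0"
proof -
  have "(\<lambda>M. \<integral>\<^sup>+ s. ennreal ((cm_kernel \<mu> \<rho> t s - cm_kernel_trunc \<mu> \<rho> M t s)\<^sup>2) * indicator {0..t} s \<partial>lborel)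
            \<longlonglongrightarrow> (\<integral>\<^sup>+ s. 0 \<partial>(lborel::real measure))"
  proof (rule nn_integral_dominated_convergence[where u="\<lambda>M s. ennreal ((cm_kernel \<mu> \<rho> t s - cm_kernel_trunc \<mu> \<rho> M t s)\<^sup>2) * indicator {0..t} s" and u'="\<lambda>s. 0" and w="\<lambda>s. ennreal ((cm_kernel \<mu> \<rho> t s)\<^sup>2) * indicator {0..t} s"])
    show "(\<lambda>s. ennreal ((cm_kernel \<mu> \<rho> t s - cm_kernel_trunc \<mu> \<rho> M t s)\<^sup>2) * indicator {0..t} s) \<in> borel_measurable lborel" for M
      by measurable
    show "(\<lambda>s. 0) \<in> borel_measurable lborel" by simp
    show "(\<lambda>s. ennreal ((cm_kernel \<mu> \<rho> t s)\<^sup>2) * indicator {0..t} s) \<in> borel_measurable lborel"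
      by measurable
    have "(\<integral>\<^sup>+ s. ennreal ((cm_kernel \<mu> \<rho> t s)\<^sup>2) * indicator {0..t} s \<partial>lborel)
        \<le> (\<integral>\<^sup>+ u\<in>{0..t}. ennreal ((cm_kernel \<mu> \<rho> t u)\<^sup>2) \<partial>lborel)
          + (\<integral>\<^sup>+ u\<in>{0..0}. ennreal ((cm_kernel \<mu> \<rho> t u - cm_kernel \<mu> \<rho> 0 u)\<^sup>2) \<partial>lborel)"
      by simp
    also have "\<dots> \<le> ennreal (\<eta> * (t - 0) powr (2 * \<gamma>))"
      using hb t unfolding holder_bound_def by blast
    also have "\<dots> < \<infinity>" by simp
    finally show "(\<integral>\<^sup>+ s. ennreal ((cm_kernel \<mu> \<rho> t s)\<^sup>2) * indicator {0..t} s \<partial>lborel) < \<infinity>" .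
    have ae: "AE u in lborel. u \<noteq> 0" "AE u in lborel. u \<noteq> t" by (rule AE_lborel_singleton)+
    show "AE s in lborel. ennreal ((cm_kernel \<mu> \<rho> t s - cm_kernel_trunc \<mu> \<rho> M t s)\<^sup>2) * indicator {0..t} s
        \<le> ennreal ((cm_kernel \<mu> \<rho> t s)\<^sup>2) * indicator {0..t} s" for M
      using ae
    proof eventually_elim
      case (elim u)
      show ?case
      proof (cases "u \<in> {0..t}")
        case True
        then have "0 < u" "u < t" using elim by auto
        then have "cm_kernel_trunc \<mu> \<rho> M t u \<le> cm_kernel \<mu> \<rho> t u"
          by (intro trunc_le_kernel Ge_fin[OF Gf])
        then have "(cm_kernel \<mu> \<rho> t u - cm_kernel_trunc \<mu> \<rho> M t u)\<^sup>2 \<le> (cm_kernel \<mu> \<rho> t u)\<^sup>2"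
          using trunc_nonneg[of M t u] by (intro power_mono) auto
        then show ?thesis using True by (simp add: ennreal_leI)
      qed simp
    qed
    show "AE s in lborel. (\<lambda>M. ennreal ((cm_kernel \<mu> \<rho> t s - cm_kernel_trunc \<mu> \<rho> M t s)\<^sup>2) * indicator {0..t} s) \<longlonglongrightarrow> 0"
      using ae
    proof eventually_elim
      case (elim u)
      show ?case
      proof (cases "u \<in> {0..t}")
        case True
        then have "0 < u" "u < t" using elim by auto
        then have "(\<lambda>M. cm_kernel_trunc \<mu> \<rho> M t u) \<longlonglongrightarrow> cm_kernel \<mu> \<rho> t u"
          by (intro trunc_lim Ge_fin[OF Gf])
        then have "(\<lambda>M. (cm_kernel \<mu> \<rho> t u - cm_kernel_trunc \<mu> \<rho> M t u)\<^sup>2) \<longlonglongrightarrow> (cm_kernel \<mu> \<rho> t u - cm_kernel \<mu> \<rho> t u)\<^sup>2"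
          by (intro tendsto_intros)
        then have "(\<lambda>M. ennreal ((cm_kernel \<mu> \<rho> t u - cm_kernel_trunc \<mu> \<rho> M t u)\<^sup>2)) \<longlonglongrightarrow> ennreal 0"
          by (intro tendsto_ennrealI) simp
        then show ?thesis using True by simp
      qed simp
    qed
  qed
  then show ?thesis by simp
qed

end
theorem mainTheorem7:
  fixes \<mu> :: "real measure" and \<rho> :: "real \<Rightarrow> real measure"
  assumes mu_borel: "sets \<mu> = sets borel"
    and mu_loc_fin: "\<And>C. compact C \<Longrightarrow> emeasure \<mu> C < \<infinity>"
    and mu_nontrivial: "emeasure \<mu> UNIV \<noteq> 0"
    and rho_borel: "\<And>\<alpha>. sets (\<rho> \<alpha>) = sets borel"
    and rho_nonneg_support: "\<And>\<alpha>. emeasure (\<rho> \<alpha>) {..<0} = 0"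
    and rho_loc_fin: "\<And>\<alpha> C. compact C \<Longrightarrow> emeasure (\<rho> \<alpha>) C < \<infinity>"
    and rho_mono: "\<And>\<alpha> \<beta> A. \<alpha> \<le> \<beta> \<Longrightarrow> A \<in> sets borel \<Longrightarrow>
                      emeasure (\<rho> \<alpha>) A \<le> emeasure (\<rho> \<beta>) A"
    and rho_atomless: "\<And>\<alpha> x. emeasure (\<rho> \<alpha>) {x} = 0"
    and Gamma_fin: "\<And>t s. 0 < s \<Longrightarrow> s < t \<Longrightarrow>
          (\<integral>\<^sup>+ \<alpha>. ennreal (exp (- measure (\<rho> \<alpha>) {s<..t})) \<partial>\<mu>) < \<infinity>"
    and K: "condition_K (cm_kernel \<mu> \<rho>)"
  shows "(\<forall>\<^sub>F M in sequentially. condition_P (cm_kernel_trunc \<mu> \<rho> M))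
       \<and> (\<forall>t \<ge> 0. (\<lambda>M. \<integral>\<^sup>+ s \<in> {0..t}.
              ennreal ((cm_kernel \<mu> \<rho> t s - cm_kernel_trunc \<mu> \<rho> M t s)\<^sup>2) \<partial>lborel)
            \<longlonglongrightarrow> 0)
       \<and> (\<forall>T. \<exists>\<eta> > 0. \<exists>\<gamma>. 0 < \<gamma> \<and> \<gamma> \<le> 1/2 \<and>
            (\<forall>M \<ge> 1. holder_bound (cm_kernel_trunc \<mu> \<rho> M) \<eta> \<gamma> T))"
proof -
  interpret C: cmk \<mu> \<rho>
    by (rule cmk.intro) (fact mu_borel mu_loc_fin rho_borel rho_nonneg_support rho_loc_fin rho_mono rho_atomless)+
  have partA: "\<forall>\<^sub>F M in sequentially. condition_P (cm_kernel_trunc \<mu> \<rho> M)"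
  proof -
    have "\<exists>M0. 0 < emeasure \<mu> (C.SM M0)"
    proof (rule ccontr)
      assume "\<not> (\<exists>M0. 0 < emeasure \<mu> (C.SM M0))"
      then have z: "\<And>M. emeasure \<mu> (C.SM M) = 0" by auto
      have "emeasure \<mu> (\<Union>M. C.SM M) = 0"
        by (rule emeasure_UN_eq_0) (auto simp: z C.SM_sets_mu)
      moreover have "(\<Union>M. C.SM M) = UNIV"
      proof (intro set_eqI iffI)
        fix x :: real
        obtain n :: nat where "\<bar>x\<bar> \<le> real n" using real_arch_simple by blast
        then have "x \<in> C.SM n" by (auto simp: C.SM_def)
        then show "x \<in> (\<Union>M. C.SM M)" by blast
      qed auto
      ultimately show False using mu_nontrivial by simp
    qed
    then obtain M0 where M0: "0 < emeasure \<mu> (C.SM M0)" by blast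
    show ?thesis unfolding eventually_sequentially
    proof (intro exI allI impI)
      fix M assume "M0 \<le> M"
      interpret P: pn \<mu> \<rho> "C.NM M" by (rule C.NM_pn)
      have eqG: "cm_kernel_trunc \<mu> \<rho> M = P.G"
        by (intro ext) (rule C.trunc_eq)
      have pos: "0 < P.G s s" for s
      proof -
        have "emeasure \<mu> (C.SM M0) \<le> emeasure \<mu> (C.SM M)"
          using \<open>M0 \<le> M\<close> by (intro emeasure_mono C.SM_mono) (auto simp: C.SM_sets_mu)
        then have "0 < emeasure \<mu> (C.SM M)" using M0 by simp
        moreover have "emeasure \<mu> (C.SM M) < \<infinity>" by (rule C.SM_fin)
        ultimately show ?thesis
          unfolding P.G_same measure_def C.NM_emeasure_space by (simp add: enn2real_positive_iff)
      qed
      show "condition_P (cm_kernel_trunc \<mu> \<rho> M)"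
        unfolding condition_P_def eqG
        using continuous_on_subset[OF P.G_cont] P.G_preserves pos P.G_mono_t by auto
    qed
  qed
  have partB: "\<forall>t \<ge> 0. (\<lambda>M. \<integral>\<^sup>+ s \<in> {0..t}.
              ennreal ((cm_kernel \<mu> \<rho> t s - cm_kernel_trunc \<mu> \<rho> M t s)\<^sup>2) \<partial>lborel)
            \<longlonglongrightarrow> 0"
  proof (intro allI impI)
    fix t :: real assume t: "0 \<le> t"
    from K obtain \<eta> \<gamma> where hb: "holder_bound (cm_kernel \<mu> \<rho>) \<eta> \<gamma> t"
      unfolding condition_K_def by blast
    show "(\<lambda>M. \<integral>\<^sup>+ s \<in> {0..t}.
              ennreal ((cm_kernel \<mu> \<rho> t s - cm_kernel_trunc \<mu> \<rho> M t s)\<^sup>2) \<partial>lborel)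
            \<longlonglongrightarrow> 0"
      by (rule C.conv[OF _ hb t]) (rule Gamma_fin)
  qed
  have partC: "\<forall>T. \<exists>\<eta> > 0. \<exists>\<gamma>. 0 < \<gamma> \<and> \<gamma> \<le> 1/2 \<and>
            (\<forall>M \<ge> 1. holder_bound (cm_kernel_trunc \<mu> \<rho> M) \<eta> \<gamma> T)"
  proof
    fix T :: real
    from K obtain \<eta> \<gamma> where "\<eta> > 0" "0 < \<gamma>" "\<gamma> \<le> 1/2" and hb: "holder_bound (cm_kernel \<mu> \<rho>) \<eta> \<gamma> T"
      unfolding condition_K_def by blast
    have "holder_bound (cm_kernel_trunc \<mu> \<rho> M) \<eta> \<gamma> T" for M
      by (rule C.holder_transfer[OF _ hb]) (rule Gamma_fin)
    then show "\<exists>\<eta> > 0. \<exists>\<gamma>. 0 < \<gamma> \<and> \<gamma> \<le> 1/2 \<and>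
            (\<forall>M \<ge> 1. holder_bound (cm_kernel_trunc \<mu> \<rho> M) \<eta> \<gamma> T)"
      using \<open>\<eta> > 0\<close> \<open>0 < \<gamma>\<close> \<open>\<gamma> \<le> 1/2\<close> by blast
  qed
  show ?thesis using partA partB partC by blast
qed

end
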